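(* Let $\mathcal{X}=\sum_{k=1}^r\beta_k\bigcirc_{\ell=1}^d\mathbf{y}^{(\ell)}_k$ and $\mathcal{Y}=\sum_{k=1}^r\alpha_k\bigcirc_{\ell=1}^d\mathbf{y}^{(\ell)}_k$ be tensors in $\mathbb{C}^{n_1\times\cdots\times n_d}$ in standard form with the same unit vectors $\mathbf{y}^{(\ell)}_k$. Let $\epsilon\in(0,3/4]$ and for each $j\in[d]$ let $\mathbf{A}_j\in\mathbb{C}^{m_j\times n_j}$ be an $(\epsilon/4d)$-JL embedding into $\mathbb{C}^{m_j}$ of $$\mathcal{S}'_j:=\Big(\bigcup_{1\le h<k\le r}\{\mathbf{y}^{(j)}_k-\mathbf{y}^{(j)}_h,\ \mathbf{y}^{(j)}_k+\mathbf{y}^{(j)}_h,\ \mathbf{y}^{(j)}_k-\mathrm{i}\,\mathbf{y}^{(j)}_h,\ \mathbf{y}^{(j)}_k+\mathrm{i}\,\mathbf{y}^{(j)}_h\}\Big)\cup\{\mathbf{y}^{(j)}_k\}_{k\in[r]}.$$ Define $$\epsilon':=\begin{cases}\big(\epsilon+e\sqrt{r(r-1)}\,\epsilon^d\big)e & \text{if }\mu_{\mathcal{Y}}=0,\\ \epsilon\big(e+e^2\sqrt{r(r-1)}\max(\epsilon^{d-1},\mu_{\mathcal{Y}}^{d-1})\big)&\text{otherwise.}\end{cases}$$ Then, writing $\mathcal{Z}\times_{j=1}^d\mathbf{A}_j:=\mathcal{Z}\times_1\mathbf{A}_1\cdots\times_d\mathbf{A}_d$, $$\big|\langle\mathcal{X}\times_{j=1}^d\mathbf{A}_j,\mathcal{Y}\times_{j=1}^d\mathbf{A}_j\rangle-\langle\mathcal{X},\mathcal{Y}\rangle\big|\le2\epsilon'(\|\boldsymbol\beta\|_2^2+\|\boldsymbol\alpha\|_2^2)\le4\epsilon'\max\{\|\boldsymbol\beta\|_2^2,\|\boldsymbol\alpha\|_2^2\},$$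 and, if moreover $\mu'_{\mathcal{Y}}<(r-1)^{-1}$, the last quantity is at most $4\epsilon'\frac{\max\{\|\mathcal{X}\|^2,\|\mathcal{Y}\|^2\}}{1-(r-1)\mu'_{\mathcal{Y}}}$.
   Context: Tensors carry the inner product $\langle\mathcal{X},\mathcal{Y}\rangle=\sum\mathcal{X}_{i_1\dots i_d}\overline{\mathcal{Y}_{i_1\dots i_d}}$ and norm $\|\cdot\|$; $\bigcirc$ is the outer product; $(\mathcal{Z}\times_j\mathbf{U})_{i_1,\dots,\ell,\dots,i_d}=\sum_{i_j}\mathcal{Z}_{i_1,\dots,i_j,\dots,i_d}\mathbf{U}_{\ell,i_j}$; $\mathrm{i}$ is the imaginary unit, $e$ Euler's number. Standard form means $\|\mathbf{y}^{(\ell)}_k\|_2=1$ for all $\ell,k$. A matrix $\mathbf{A}$ is an $\epsilon$-JL embedding of $S$ if $\|\mathbf{A}x\|_2^2=(1+\epsilon_x)\|x\|_2^2$ with $\epsilon_x\in(-\epsilon,\epsilon)$ for all $x\in S$. Relative to the vectors $\mathbf{y}^{(\ell)}_k$: $\mu_{\mathcal{Y}}=\max_{\ell\in[d]}\max_{k\ne h}|\langle\mathbf{y}^{(\ell)}_k,\mathbf{y}^{(\ell)}_h\rangle|$ and $\mu'_{\mathcal{Y}}=\max_{k\ne h}\prod_{\ell=1}^d|\langle\mathbf{y}^{(\ell)}_k,\mathbf{y}^{(\ell)}_h\rangle|$. *)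

theory Defs
  imports "HOL-Analysis.Analysis"
begin

(* Conventions: tensor order d, modes indexed 0..d-1; mode l has size n l.
   A tensor is a function (nat \<Rightarrow> nat) \<Rightarrow> complex; only its values on the
   index set matter.  Vectors of C^N are functions nat \<Rightarrow> complex (entries 0..N-1);
   matrices in C^{m x N} are functions nat \<Rightarrow> nat \<Rightarrow> complex (row, column). *)

definition tidx :: "nat \<Rightarrow> (nat \<Rightarrow> nat) \<Rightarrow> (nat \<Rightarrow> nat) set" where
  "tidx d n = PiE {..<d} (\<lambda>l. {..<n l})"

definition tinner :: "nat \<Rightarrow> (nat \<Rightarrow> nat) \<Rightarrow> ((nat \<Rightarrow> nat) \<Rightarrow> complex)
     \<Rightarrow> ((nat \<Rightarrow> nat) \<Rightarrow> complex) \<Rightarrow> complex" where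
  "tinner d n X Y = (\<Sum>i\<in>tidx d n. X i * cnj (Y i))"

definition tnorm2 :: "nat \<Rightarrow> (nat \<Rightarrow> nat) \<Rightarrow> ((nat \<Rightarrow> nat) \<Rightarrow> complex) \<Rightarrow> real" where
  "tnorm2 d n X = (\<Sum>i\<in>tidx d n. (cmod (X i))\<^sup>2)"

definition cp_tensor :: "nat \<Rightarrow> nat \<Rightarrow> (nat \<Rightarrow> complex) \<Rightarrow> (nat \<Rightarrow> nat \<Rightarrow> nat \<Rightarrow> complex)
     \<Rightarrow> (nat \<Rightarrow> nat) \<Rightarrow> complex" where
  "cp_tensor d r c y = (\<lambda>i. \<Sum>k<r. c k * (\<Prod>l<d. y l k (i l)))"

definition mode_prod :: "nat \<Rightarrow> nat \<Rightarrow> (nat \<Rightarrow> nat \<Rightarrow> complex)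
     \<Rightarrow> ((nat \<Rightarrow> nat) \<Rightarrow> complex) \<Rightarrow> (nat \<Rightarrow> nat) \<Rightarrow> complex" where
  "mode_prod nj j U Z = (\<lambda>i. \<Sum>t<nj. Z (i(j := t)) * U (i j) t)"

text \<open>Z x_1 A_1 ... x_k A_k (modes 0..k-1 in 0-based indexing).\<close>
fun multi_mode_prod :: "(nat \<Rightarrow> nat) \<Rightarrow> (nat \<Rightarrow> nat \<Rightarrow> nat \<Rightarrow> complex) \<Rightarrow> nat
     \<Rightarrow> ((nat \<Rightarrow> nat) \<Rightarrow> complex) \<Rightarrow> (nat \<Rightarrow> nat) \<Rightarrow> complex" where
  "multi_mode_prod n A 0 Z = Z"
| "multi_mode_prod n A (Suc j) Z = mode_prod (n j) j (A j) (multi_mode_prod n A j Z)"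

definition vnorm2 :: "nat \<Rightarrow> (nat \<Rightarrow> complex) \<Rightarrow> real" where
  "vnorm2 N x = (\<Sum>t<N. (cmod (x t))\<^sup>2)"

definition vinner :: "nat \<Rightarrow> (nat \<Rightarrow> complex) \<Rightarrow> (nat \<Rightarrow> complex) \<Rightarrow> complex" where
  "vinner N x y = (\<Sum>t<N. x t * cnj (y t))"

definition mat_vec :: "nat \<Rightarrow> (nat \<Rightarrow> nat \<Rightarrow> complex) \<Rightarrow> (nat \<Rightarrow> complex) \<Rightarrow> nat \<Rightarrow> complex" where
  "mat_vec N A x = (\<lambda>a. \<Sum>b<N. A a b * x b)"

definition is_JL :: "real \<Rightarrow> nat \<Rightarrow> nat \<Rightarrow> (nat \<Rightarrow> nat \<Rightarrow> complex) \<Rightarrow> (nat \<Rightarrow> complex) set \<Rightarrow> bool" where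
  "is_JL eps m N A S \<longleftrightarrow> (\<forall>x\<in>S. \<exists>ex. -eps < ex \<and> ex < eps \<and>
      vnorm2 m (mat_vec N A x) = (1 + ex) * vnorm2 N x)"

definition S_prime :: "nat \<Rightarrow> (nat \<Rightarrow> nat \<Rightarrow> complex) \<Rightarrow> (nat \<Rightarrow> complex) set" where
  "S_prime r y = (\<Union>k<r. \<Union>h<k. {\<lambda>t. y k t - y h t, \<lambda>t. y k t + y h t,
       \<lambda>t. y k t - \<i> * y h t, \<lambda>t. y k t + \<i> * y h t}) \<union> {y k | k. k < r}"

text \<open>Coherences; maxima over empty sets are taken to be 0.\<close>
definition mu_Y :: "nat \<Rightarrow> (nat \<Rightarrow> nat) \<Rightarrow> nat \<Rightarrow> (nat \<Rightarrow> nat \<Rightarrow> nat \<Rightarrow> complex) \<Rightarrow> real" where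
  "mu_Y d n r y = Max (insert 0 {cmod (vinner (n l) (y l k) (y l h)) | l k h. l < d \<and> k < r \<and> h < r \<and> k \<noteq> h})"

definition mu'_Y :: "nat \<Rightarrow> (nat \<Rightarrow> nat) \<Rightarrow> nat \<Rightarrow> (nat \<Rightarrow> nat \<Rightarrow> nat \<Rightarrow> complex) \<Rightarrow> real" where
  "mu'_Y d n r y = Max (insert 0 {(\<Prod>l<d. cmod (vinner (n l) (y l k) (y l h))) | k h. k < r \<and> h < r \<and> k \<noteq> h})"

end

theory Submission
  imports Defs
begin


lemma tinner_cp:
  "tinner d N (cp_tensor d r b z) (cp_tensor d r a z) =
   (\<Sum>k<r. \<Sum>h<r. b k * cnj (a h) * (\<Prod>l<d. vinner (N l) (z l k) (z l h)))"
proof -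
  have "tinner d N (cp_tensor d r b z) (cp_tensor d r a z) =
     (\<Sum>i\<in>tidx d N. \<Sum>k<r. \<Sum>h<r. b k * cnj (a h) * (\<Prod>l<d. z l k (i l) * cnj (z l h (i l))))"
    unfolding tinner_def cp_tensor_def
    apply (simp add: sum_distrib_left sum_distrib_right cnj_sum cnj_prod prod.distrib mult_ac)
    apply (rule sum.cong[OF refl])
    apply (subst sum.swap)
    apply simp
    done
  also have "\<dots> = (\<Sum>k<r. \<Sum>h<r. \<Sum>i\<in>tidx d N. b k * cnj (a h) * (\<Prod>l<d. z l k (i l) * cnj (z l h (i l))))"
    by (simp add: sum.swap[of _ "tidx d N"])
  also have "\<dots> = (\<Sum>k<r. \<Sum>h<r. b k * cnj (a h) * (\<Prod>l<d. vinner (N l) (z l k) (z l h)))"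
  proof (intro sum.cong refl)
    fix k h
    have "(\<Prod>l<d. vinner (N l) (z l k) (z l h)) = (\<Sum>i\<in>tidx d N. \<Prod>l<d. z l k (i l) * cnj (z l h (i l)))"
      unfolding vinner_def tidx_def by (rule prod_sum_PiE) auto
    then show "(\<Sum>i\<in>tidx d N. b k * cnj (a h) * (\<Prod>l<d. z l k (i l) * cnj (z l h (i l)))) =
        b k * cnj (a h) * (\<Prod>l<d. vinner (N l) (z l k) (z l h))"
      by (simp add: sum_distrib_left)
  qed
  finally show ?thesis .
qed

definition ypart where
  "ypart n A y j = (\<lambda>l k. if l < j then mat_vec (n l) (A l) (y l k) else y l k)"

lemma mmp_cp:
  "j \<le> d \<Longrightarrow> multi_mode_prod n A j (cp_tensor d r c y) = cp_tensor d r c (ypart n A y j)"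
proof (induction j)
  case 0
  then show ?case by (simp add: ypart_def)
next
  case (Suc j)
  then have jd: "j < d" by simp
  have IH: "multi_mode_prod n A j (cp_tensor d r c y) = cp_tensor d r c (ypart n A y j)"
    using Suc by simp
  show ?case
  proof (rule ext)
    fix i
    let ?z = "ypart n A y j"
    have split: "\<And>f. (\<Prod>l<d. f l) = f j * (\<Prod>l\<in>{..<d}-{j}. f l)"
      using jd by (meson finite_lessThan lessThan_iff prod.remove)
    have "multi_mode_prod n A (Suc j) (cp_tensor d r c y) i =
       (\<Sum>t<n j. (\<Sum>k<r. c k * (\<Prod>l<d. ?z l k ((i(j := t)) l))) * A j (i j) t)"
      by (simp only: multi_mode_prod.simps IH) (simp add: mode_prod_def cp_tensor_def)
    also have "\<dots> = (\<Sum>t<n j. \<Sum>k<r. c k * (A j (i j) t * y j k t) * (\<Prod>l\<in>{..<d}-{j}. ?z l k (i l)))"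
      apply (intro sum.cong refl)
      apply (subst split)
      apply (simp add: sum_distrib_right ypart_def)
      apply (intro sum.cong refl)
      apply (subgoal_tac "(\<Prod>l\<in>{..<d}-{j}. ?z l k ((i(j := t)) l)) = (\<Prod>l\<in>{..<d}-{j}. ?z l k (i l))")
      apply (simp add: ypart_def)
      apply (intro prod.cong refl) apply simp
      done
    also have "\<dots> = (\<Sum>k<r. c k * mat_vec (n j) (A j) (y j k) (i j) * (\<Prod>l\<in>{..<d}-{j}. ?z l k (i l)))"
      by (subst sum.swap) (simp add: mat_vec_def sum_distrib_left sum_distrib_right)
    also have "\<dots> = cp_tensor d r c (ypart n A y (Suc j)) i"
      unfolding cp_tensor_def
      apply (intro sum.cong refl)
      apply (subst split)
      apply (simp add: ypart_def)
      apply (intro disjI2 prod.cong refl)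
      apply auto
      done
    finally show "multi_mode_prod n A (Suc j) (cp_tensor d r c y) i = cp_tensor d r c (ypart n A y (Suc j)) i" .
  qed
qed

lemma mmp_cp_full:
  "multi_mode_prod n A d (cp_tensor d r c y) = cp_tensor d r c (\<lambda>l k. mat_vec (n l) (A l) (y l k))"
  by (simp only: mmp_cp[OF order_refl]) (simp add: cp_tensor_def ypart_def)




lemma mat_vec_lin: "mat_vec N B (\<lambda>t. u t + c * v t) = (\<lambda>a. mat_vec N B u a + c * mat_vec N B v a)"
  unfolding mat_vec_def by (auto simp: sum.distrib sum_distrib_left algebra_simps)

lemma mat_vec_lin2: "mat_vec N B (\<lambda>t. u t - c * v t) = (\<lambda>a. mat_vec N B u a - c * mat_vec N B v a)"
  unfolding mat_vec_def by (auto simp: sum_subtractf sum_distrib_left algebra_simps)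

lemma polar_pt: "4 * (x * cnj y) = complex_of_real ((cmod (x + y))\<^sup>2 - (cmod (x - y))\<^sup>2)
   + \<i> * complex_of_real ((cmod (x + \<i> * y))\<^sup>2 - (cmod (x - \<i> * y))\<^sup>2)"
  by (simp only: cmod_power2) (simp add: complex_eq_iff power2_eq_square algebra_simps)

lemma para_pt: "(cmod (x + y))\<^sup>2 + (cmod (x - y))\<^sup>2 = 2 * (cmod x)\<^sup>2 + 2 * (cmod y)\<^sup>2"
  by (simp only: cmod_power2) (simp add: power2_eq_square algebra_simps)

lemma para_pt2: "(cmod (x + \<i> * y))\<^sup>2 + (cmod (x - \<i> * y))\<^sup>2 = 2 * (cmod x)\<^sup>2 + 2 * (cmod y)\<^sup>2"
  by (simp only: cmod_power2) (simp add: power2_eq_square algebra_simps)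

lemma polar: "4 * vinner N u v = complex_of_real (vnorm2 N (\<lambda>t. u t + v t) - vnorm2 N (\<lambda>t. u t - v t))
   + \<i> * complex_of_real (vnorm2 N (\<lambda>t. u t + \<i> * v t) - vnorm2 N (\<lambda>t. u t - \<i> * v t))"
  unfolding vinner_def vnorm2_def
  by (simp add: sum_distrib_left polar_pt sum.distrib sum_subtractf of_real_sum right_diff_distrib)

lemma para: "vnorm2 N (\<lambda>t. u t + v t) + vnorm2 N (\<lambda>t. u t - v t) = 2 * vnorm2 N u + 2 * vnorm2 N v"
  unfolding vnorm2_def by (simp add: para_pt sum.distrib sum_distrib_left flip: sum.distrib)

lemma para2: "vnorm2 N (\<lambda>t. u t + \<i> * v t) + vnorm2 N (\<lambda>t. u t - \<i> * v t) = 2 * vnorm2 N u + 2 * vnorm2 N v"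
  unfolding vnorm2_def by (simp add: para_pt2 sum.distrib sum_distrib_left flip: sum.distrib)

lemma vnorm2_nonneg: "vnorm2 N u \<ge> 0"
  unfolding vnorm2_def by (simp add: sum_nonneg)

lemma vinner_self: "vinner N u u = complex_of_real (vnorm2 N u)"
  unfolding vinner_def vnorm2_def by (simp only: of_real_sum complex_norm_square)

lemma vinner_cnj: "vinner N u v = cnj (vinner N v u)"
  unfolding vinner_def by (simp add: cnj_sum mult.commute)

lemma JL_get:
  assumes "is_JL e M N B S" "x \<in> S"
  obtains ex where "\<bar>ex\<bar> < e" "vnorm2 M (mat_vec N B x) = (1 + ex) * vnorm2 N x"
  using assms unfolding is_JL_def by (metis abs_less_iff minus_less_iff)

lemma mode_err_lt:
  assumes JL: "is_JL e M N B (S_prime r yv)"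
    and unit: "\<And>k. k < r \<Longrightarrow> vnorm2 N (yv k) = 1"
    and hk: "h < k" "k < r"
  shows "cmod (vinner M (mat_vec N B (yv k)) (mat_vec N B (yv h)) - vinner N (yv k) (yv h)) \<le> 2 * e"
proof -
  let ?u = "yv k" and ?v = "yv h"
  let ?Au = "mat_vec N B ?u" and ?Av = "mat_vec N B ?v"
  have m1: "(\<lambda>t. ?u t + ?v t) \<in> S_prime r yv" using hk unfolding S_prime_def by blast
  have m2: "(\<lambda>t. ?u t - ?v t) \<in> S_prime r yv" using hk unfolding S_prime_def by blast
  have m3: "(\<lambda>t. ?u t + \<i> * ?v t) \<in> S_prime r yv" using hk unfolding S_prime_def by blast
  have m4: "(\<lambda>t. ?u t - \<i> * ?v t) \<in> S_prime r yv" using hk unfolding S_prime_def by blast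
  obtain e1 where e1: "\<bar>e1\<bar> < e" "vnorm2 M (mat_vec N B (\<lambda>t. ?u t + ?v t)) = (1 + e1) * vnorm2 N (\<lambda>t. ?u t + ?v t)"
    using JL_get[OF JL m1] by blast
  obtain e2 where e2: "\<bar>e2\<bar> < e" "vnorm2 M (mat_vec N B (\<lambda>t. ?u t - ?v t)) = (1 + e2) * vnorm2 N (\<lambda>t. ?u t - ?v t)"
    using JL_get[OF JL m2] by blast
  obtain e3 where e3: "\<bar>e3\<bar> < e" "vnorm2 M (mat_vec N B (\<lambda>t. ?u t + \<i> * ?v t)) = (1 + e3) * vnorm2 N (\<lambda>t. ?u t + \<i> * ?v t)"
    using JL_get[OF JL m3] by blast
  obtain e4 where e4: "\<bar>e4\<bar> < e" "vnorm2 M (mat_vec N B (\<lambda>t. ?u t - \<i> * ?v t)) = (1 + e4) * vnorm2 N (\<lambda>t. ?u t - \<i> * ?v t)"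
    using JL_get[OF JL m4] by blast
  define s1 where "s1 = vnorm2 N (\<lambda>t. ?u t + ?v t)"
  define s2 where "s2 = vnorm2 N (\<lambda>t. ?u t - ?v t)"
  define s3 where "s3 = vnorm2 N (\<lambda>t. ?u t + \<i> * ?v t)"
  define s4 where "s4 = vnorm2 N (\<lambda>t. ?u t - \<i> * ?v t)"
  have s12: "s1 + s2 = 4" using para[of N ?u ?v] unit hk unfolding s1_def s2_def by simp
  have s34: "s3 + s4 = 4" using para2[of N ?u ?v] unit hk unfolding s3_def s4_def by simp
  have sn: "s1 \<ge> 0" "s2 \<ge> 0" "s3 \<ge> 0" "s4 \<ge> 0" unfolding s1_def s2_def s3_def s4_def
    by (simp_all add: vnorm2_nonneg)
  have l1: "vnorm2 M (\<lambda>t. ?Au t + ?Av t) = (1 + e1) * s1"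
    using e1(2) mat_vec_lin[of N B ?u 1 ?v] unfolding s1_def by simp
  have l2: "vnorm2 M (\<lambda>t. ?Au t - ?Av t) = (1 + e2) * s2"
    using e2(2) mat_vec_lin2[of N B ?u 1 ?v] unfolding s2_def by simp
  have l3: "vnorm2 M (\<lambda>t. ?Au t + \<i> * ?Av t) = (1 + e3) * s3"
    using e3(2) mat_vec_lin[of N B ?u \<i> ?v] unfolding s3_def by simp
  have l4: "vnorm2 M (\<lambda>t. ?Au t - \<i> * ?Av t) = (1 + e4) * s4"
    using e4(2) mat_vec_lin2[of N B ?u \<i> ?v] unfolding s4_def by simp
  have "4 * (vinner M ?Au ?Av - vinner N ?u ?v) =
      complex_of_real (e1 * s1 - e2 * s2) + \<i> * complex_of_real (e3 * s3 - e4 * s4)"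
  proof -
    have P1: "4 * vinner M ?Au ?Av = complex_of_real ((1+e1) * s1 - (1+e2) * s2) + \<i> * complex_of_real ((1+e3) * s3 - (1+e4) * s4)"
      using polar[of M ?Au ?Av] unfolding l1 l2 l3 l4 .
    have P2: "4 * vinner N ?u ?v = complex_of_real (s1 - s2) + \<i> * complex_of_real (s3 - s4)"
      using polar[of N ?u ?v] unfolding s1_def s2_def s3_def s4_def .
    show ?thesis unfolding right_diff_distrib P1 P2 by (simp add: algebra_simps)
  qed
  then have "4 * cmod (vinner M ?Au ?Av - vinner N ?u ?v) =
      cmod (complex_of_real (e1 * s1 - e2 * s2) + \<i> * complex_of_real (e3 * s3 - e4 * s4))"
    by (metis norm_mult norm_numeral)
  also have "\<dots> \<le> \<bar>e1 * s1 - e2 * s2\<bar> + \<bar>e3 * s3 - e4 * s4\<bar>"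
    by (rule order.trans[OF norm_triangle_ineq]) (simp only: norm_mult norm_of_real, simp)
  also have "\<dots> \<le> (\<bar>e1\<bar> * s1 + \<bar>e2\<bar> * s2) + (\<bar>e3\<bar> * s3 + \<bar>e4\<bar> * s4)"
    using sn by (intro add_mono) (auto simp: abs_mult intro!: order.trans[OF abs_triangle_ineq4])
  also have "\<dots> \<le> (e * s1 + e * s2) + (e * s3 + e * s4)"
    using sn e1 e2 e3 e4 by (intro add_mono mult_right_mono) auto
  also have "\<dots> = e * (s1 + s2) + e * (s3 + s4)" by (simp add: algebra_simps)
  also have "\<dots> = 8 * e" using s12 s34 by simp
  finally show ?thesis by simp
qed

lemma mode_err:
  assumes JL: "is_JL e M N B (S_prime r yv)"
    and unit: "\<And>k. k < r \<Longrightarrow> vnorm2 N (yv k) = 1"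
    and hk: "h < r" "k < r"
  shows "cmod (vinner M (mat_vec N B (yv k)) (mat_vec N B (yv h)) - vinner N (yv k) (yv h)) \<le> 2 * e"
proof (cases k h rule: linorder_cases)
  case less
  have "cmod (vinner M (mat_vec N B (yv h)) (mat_vec N B (yv k)) - vinner N (yv h) (yv k)) \<le> 2 * e"
    using mode_err_lt[OF JL unit less hk(1)] by blast
  then show ?thesis
    by (metis complex_cnj_diff complex_mod_cnj vinner_cnj)
next
  case equal
  have m: "yv k \<in> S_prime r yv" using hk unfolding S_prime_def by blast
  obtain ex where ex: "\<bar>ex\<bar> < e" "vnorm2 M (mat_vec N B (yv k)) = (1 + ex) * vnorm2 N (yv k)"
    using JL_get[OF JL m] by blast
  have "vinner M (mat_vec N B (yv k)) (mat_vec N B (yv h)) - vinner N (yv k) (yv h) = complex_of_real ex"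
    using equal ex unit[OF hk(2)] by (simp add: vinner_self)
  then show ?thesis using ex by simp
next
  case greater
  then show ?thesis using mode_err_lt[OF JL unit greater hk(2)] by blast
qed




lemma prod_pert:
  fixes a b :: "nat \<Rightarrow> complex"
  assumes "\<And>l. l < d \<Longrightarrow> cmod (a l) \<le> B" "\<And>l. l < d \<Longrightarrow> cmod (b l - a l) \<le> \<eta>"
    and "B \<ge> 0" "\<eta> \<ge> 0"
  shows "cmod ((\<Prod>l<d. b l) - (\<Prod>l<d. a l)) \<le> real d * \<eta> * (B + \<eta>) ^ (d - 1)"
  using assms(1,2)
proof (induction d)
  case 0
  then show ?case by simp
next
  case (Suc d)
  have IH: "cmod ((\<Prod>l<d. b l) - (\<Prod>l<d. a l)) \<le> real d * \<eta> * (B + \<eta>) ^ (d - 1)"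
    using Suc by simp
  have ad: "cmod (a d) \<le> B" and bad: "cmod (b d - a d) \<le> \<eta>" using Suc.prems by auto
  have bd: "cmod (b d) \<le> B + \<eta>"
    using ad bad norm_triangle_ineq[of "a d" "b d - a d"] by simp
  have pa: "cmod (\<Prod>l<d. a l) \<le> B ^ d"
  proof -
    have "cmod (\<Prod>l<d. a l) = (\<Prod>l<d. cmod (a l))" by (simp add: prod_norm)
    also have "\<dots> \<le> (\<Prod>l<d. B)" using Suc.prems(1) by (intro prod_mono) auto
    finally show ?thesis by simp
  qed
  have "(\<Prod>l<Suc d. b l) - (\<Prod>l<Suc d. a l) =
     ((\<Prod>l<d. b l) - (\<Prod>l<d. a l)) * b d + (\<Prod>l<d. a l) * (b d - a d)"
    by (simp add: algebra_simps)
  then have "cmod ((\<Prod>l<Suc d. b l) - (\<Prod>l<Suc d. a l)) \<le>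
      cmod ((\<Prod>l<d. b l) - (\<Prod>l<d. a l)) * cmod (b d) + cmod (\<Prod>l<d. a l) * cmod (b d - a d)"
    by (metis norm_mult norm_triangle_ineq)
  also have "\<dots> \<le> (real d * \<eta> * (B + \<eta>) ^ (d - 1)) * (B + \<eta>) + B ^ d * \<eta>"
    using IH bd pa bad assms(3,4)
    by (intro add_mono mult_mono) auto
  also have "\<dots> \<le> real d * \<eta> * (B + \<eta>) ^ d + (B + \<eta>) ^ d * \<eta>"
  proof (intro add_mono mult_right_mono power_mono)
    show "real d * \<eta> * (B + \<eta>) ^ (d - 1) * (B + \<eta>) \<le> real d * \<eta> * (B + \<eta>) ^ d"
      by (cases d) (auto simp: algebra_simps)
  qed (use assms(3,4) in auto)
  also have "\<dots> = real (Suc d) * \<eta> * (B + \<eta>) ^ (Suc d - 1)" by (simp add: algebra_simps)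
  finally show ?case .
qed

lemma one_plus_pow_exp: "x \<ge> 0 \<Longrightarrow> (1 + x) ^ k \<le> exp (real k * x)"
proof -
  assume "x \<ge> 0"
  have "(1 + x) ^ k \<le> exp x ^ k"
    using \<open>x \<ge> 0\<close> by (intro power_mono) (auto simp: exp_ge_add_one_self)
  also have "\<dots> = exp (real k * x)" by (simp add: exp_of_nat_mult)
  finally show ?thesis .
qed

lemma diag_num:
  assumes "d \<ge> 1" "0 < \<epsilon>" "\<epsilon> \<le> 3/4"
  shows "real d * (\<epsilon> / (2 * real d)) * (1 + \<epsilon> / (2 * real d)) ^ (d - 1) \<le> \<epsilon> / 2 * exp 1"
proof -
  have "(1 + \<epsilon> / (2 * real d)) ^ (d - 1) \<le> exp (real (d - 1) * (\<epsilon> / (2 * real d)))"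
    using assms by (intro one_plus_pow_exp) auto
  also have "\<dots> \<le> exp 1"
  proof -
    have "real (d - 1) * (\<epsilon> / (2 * real d)) \<le> real d * (1 / real d)"
      using assms by (intro mult_mono frac_le) auto
    then show ?thesis using assms by simp
  qed
  finally have "(1 + \<epsilon> / (2 * real d)) ^ (d - 1) \<le> exp 1" .
  moreover have "real d * (\<epsilon> / (2 * real d)) = \<epsilon> / 2" using assms by simp
  ultimately show ?thesis using assms by (simp add: mult_left_mono)
qed

lemma off_num:
  assumes "d \<ge> 1" "0 < \<epsilon>" "\<epsilon> \<le> 3/4" "0 \<le> \<mu>"
  shows "real d * (\<epsilon> / (2 * real d)) * (\<mu> + \<epsilon> / (2 * real d)) ^ (d - 1)
     \<le> \<epsilon> / 2 * exp 1 * (max \<epsilon> \<mu>) ^ (d - 1)"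
proof -
  let ?M = "max \<epsilon> \<mu>"
  have Mpos: "?M > 0" using assms by simp
  have "\<mu> + \<epsilon> / (2 * real d) \<le> ?M * (1 + 1 / (2 * real d))"
  proof -
    have "\<epsilon> / (2 * real d) \<le> ?M / (2 * real d)" using assms by (intro divide_right_mono) auto
    then show ?thesis by (simp add: algebra_simps)
  qed
  then have "(\<mu> + \<epsilon> / (2 * real d)) ^ (d - 1) \<le> (?M * (1 + 1 / (2 * real d))) ^ (d - 1)"
    using assms by (intro power_mono) auto
  also have "\<dots> = ?M ^ (d - 1) * (1 + 1 / (2 * real d)) ^ (d - 1)" by (simp add: power_mult_distrib)
  also have "\<dots> \<le> ?M ^ (d - 1) * exp 1"
  proof (intro mult_left_mono)
    have "(1 + 1 / (2 * real d)) ^ (d - 1) \<le> exp (real (d - 1) * (1 / (2 * real d)))"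
      by (intro one_plus_pow_exp) auto
    also have "\<dots> \<le> exp 1"
    proof -
      have "real (d - 1) * (1 / (2 * real d)) \<le> real d * (1 / real d)"
        using assms by (intro mult_mono frac_le) auto
      then show ?thesis using assms by simp
    qed
    finally show "(1 + 1 / (2 * real d)) ^ (d - 1) \<le> exp 1" .
  qed (use Mpos in simp)
  finally have "(\<mu> + \<epsilon> / (2 * real d)) ^ (d - 1) \<le> ?M ^ (d - 1) * exp 1" .
  moreover have "real d * (\<epsilon> / (2 * real d)) = \<epsilon> / 2" using assms by simp
  ultimately show ?thesis using assms by (simp add: mult_left_mono mult_ac)
qed




lemma pairs_off:
  fixes x y :: "nat \<Rightarrow> real"
  shows "(\<Sum>k<r. \<Sum>h\<in>{..<r}-{k}. \<bar>x k\<bar> * \<bar>y h\<bar>) \<le> (real r - 1) * ((\<Sum>k<r. (x k)\<^sup>2) + (\<Sum>k<r. (y k)\<^sup>2)) / 2"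
proof -
  have am: "\<bar>a\<bar> * \<bar>b\<bar> \<le> (a\<^sup>2 + b\<^sup>2) / 2" for a b :: real
    using sum_squares_bound[of "\<bar>a\<bar>" "\<bar>b\<bar>"] by (simp add: power2_eq_square abs_mult_self_eq)
  have "(\<Sum>k<r. \<Sum>h\<in>{..<r}-{k}. \<bar>x k\<bar> * \<bar>y h\<bar>) \<le> (\<Sum>k<r. \<Sum>h\<in>{..<r}-{k}. ((x k)\<^sup>2 + (y h)\<^sup>2) / 2)"
    by (intro sum_mono am)
  also have "\<dots> = (\<Sum>k<r. ((real r - 1) * (x k)\<^sup>2 + ((\<Sum>h<r. (y h)\<^sup>2) - (y k)\<^sup>2)) / 2)"
  proof (intro sum.cong refl)
    fix k assume k: "k \<in> {..<r}"
    have c: "card ({..<r} - {k}) = r - 1" using k by simp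
    have "(\<Sum>h\<in>{..<r}-{k}. ((x k)\<^sup>2 + (y h)\<^sup>2) / 2) = (real (r - 1) * (x k)\<^sup>2 + (\<Sum>h\<in>{..<r}-{k}. (y h)\<^sup>2)) / 2"
      by (simp add: sum_divide_distrib[symmetric] sum.distrib c)
    also have "(\<Sum>h\<in>{..<r}-{k}. (y h)\<^sup>2) = (\<Sum>h<r. (y h)\<^sup>2) - (y k)\<^sup>2"
      using k by (simp add: sum_diff1)
    also have "real (r - 1) = real r - 1" using k by auto
    finally show "(\<Sum>h\<in>{..<r}-{k}. ((x k)\<^sup>2 + (y h)\<^sup>2) / 2) = ((real r - 1) * (x k)\<^sup>2 + ((\<Sum>h<r. (y h)\<^sup>2) - (y k)\<^sup>2)) / 2" .
  qed
  also have "\<dots> = (real r - 1) * ((\<Sum>k<r. (x k)\<^sup>2) + (\<Sum>k<r. (y k)\<^sup>2)) / 2"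
    by (simp add: sum_divide_distrib[symmetric] sum.distrib sum_distrib_left sum_subtractf algebra_simps)
  finally show ?thesis .
qed

lemma pairs_diag:
  fixes x y :: "nat \<Rightarrow> real"
  shows "(\<Sum>k<r. \<bar>x k\<bar> * \<bar>y k\<bar>) \<le> ((\<Sum>k<r. (x k)\<^sup>2) + (\<Sum>k<r. (y k)\<^sup>2)) / 2"
proof -
  have am: "\<bar>a\<bar> * \<bar>b\<bar> \<le> (a\<^sup>2 + b\<^sup>2) / 2" for a b :: real
    using sum_squares_bound[of "\<bar>a\<bar>" "\<bar>b\<bar>"] by (simp add: power2_eq_square abs_mult_self_eq)
  have "(\<Sum>k<r. \<bar>x k\<bar> * \<bar>y k\<bar>) \<le> (\<Sum>k<r. ((x k)\<^sup>2 + (y k)\<^sup>2) / 2)"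
    by (intro sum_mono am)
  also have "\<dots> = ((\<Sum>k<r. (x k)\<^sup>2) + (\<Sum>k<r. (y k)\<^sup>2)) / 2"
    by (simp add: sum_divide_distrib[symmetric] sum.distrib)
  finally show ?thesis .
qed





lemma max_pow: "(a::real) \<ge> 0 \<Longrightarrow> b \<ge> 0 \<Longrightarrow> max (a ^ k) (b ^ k) = (max a b) ^ k"
proof (cases "a \<le> b")
  case True
  assume "a \<ge> 0"
  then have "a ^ k \<le> b ^ k" using True by (intro power_mono) auto
  then show ?thesis using True by (simp add: max_absorb2)
next
  case False
  assume "b \<ge> 0"
  then have "b ^ k \<le> a ^ k" using False by (intro power_mono) auto
  then show ?thesis using False by (simp add: max_absorb1)
qed

lemma err_sum:
  fixes E :: "nat \<Rightarrow> nat \<Rightarrow> real" and \<alpha> \<beta> :: "nat \<Rightarrow> complex"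
  assumes Ed: "\<And>k. k < r \<Longrightarrow> E k k \<le> D"
    and Eo: "\<And>k h. k < r \<Longrightarrow> h < r \<Longrightarrow> k \<noteq> h \<Longrightarrow> E k h \<le> Oo"
    and DOo: "D \<ge> 0" "Oo \<ge> 0"
  shows "(\<Sum>k<r. \<Sum>h<r. cmod (\<beta> k) * cmod (\<alpha> h) * E k h)
    \<le> D * ((\<Sum>k<r. (cmod (\<beta> k))\<^sup>2) + (\<Sum>k<r. (cmod (\<alpha> k))\<^sup>2)) / 2
     + Oo * ((real r - 1) * ((\<Sum>k<r. (cmod (\<beta> k))\<^sup>2) + (\<Sum>k<r. (cmod (\<alpha> k))\<^sup>2)) / 2)"
proof -
  have "(\<Sum>k<r. \<Sum>h<r. cmod (\<beta> k) * cmod (\<alpha> h) * E k h)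
     = (\<Sum>k<r. cmod (\<beta> k) * cmod (\<alpha> k) * E k k + (\<Sum>h\<in>{..<r}-{k}. cmod (\<beta> k) * cmod (\<alpha> h) * E k h))"
    by (intro sum.cong refl) (simp add: sum.remove)
  also have "\<dots> \<le> (\<Sum>k<r. cmod (\<beta> k) * cmod (\<alpha> k) * D + (\<Sum>h\<in>{..<r}-{k}. cmod (\<beta> k) * cmod (\<alpha> h) * Oo))"
    using Ed Eo by (intro sum_mono add_mono mult_left_mono) auto
  also have "\<dots> = D * (\<Sum>k<r. \<bar>cmod (\<beta> k)\<bar> * \<bar>cmod (\<alpha> k)\<bar>) + Oo * (\<Sum>k<r. \<Sum>h\<in>{..<r}-{k}. \<bar>cmod (\<beta> k)\<bar> * \<bar>cmod (\<alpha> h)\<bar>)"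
    by (simp add: sum.distrib sum_distrib_left sum_distrib_right mult_ac)
  also have "\<dots> \<le> D * (((\<Sum>k<r. (cmod (\<beta> k))\<^sup>2) + (\<Sum>k<r. (cmod (\<alpha> k))\<^sup>2)) / 2)
     + Oo * ((real r - 1) * ((\<Sum>k<r. (cmod (\<beta> k))\<^sup>2) + (\<Sum>k<r. (cmod (\<alpha> k))\<^sup>2)) / 2)"
  proof (intro add_mono mult_left_mono)
    show "(\<Sum>k<r. \<bar>cmod (\<beta> k)\<bar> * \<bar>cmod (\<alpha> k)\<bar>) \<le> ((\<Sum>k<r. (cmod (\<beta> k))\<^sup>2) + (\<Sum>k<r. (cmod (\<alpha> k))\<^sup>2)) / 2"
      using pairs_diag[where x="\<lambda>k. cmod (\<beta> k)" and r=r and y="\<lambda>k. cmod (\<alpha> k)"] by simp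
    show "(\<Sum>k<r. \<Sum>h\<in>{..<r}-{k}. \<bar>cmod (\<beta> k)\<bar> * \<bar>cmod (\<alpha> h)\<bar>) \<le> (real r - 1) * ((\<Sum>k<r. (cmod (\<beta> k))\<^sup>2) + (\<Sum>k<r. (cmod (\<alpha> k))\<^sup>2)) / 2"
      using pairs_off[where x="\<lambda>k. cmod (\<beta> k)" and r=r and y="\<lambda>k. cmod (\<alpha> k)"] by simp
  qed (use DOo in auto)
  finally show ?thesis by simp
qed


lemma norm_lower:
  fixes b :: "nat \<Rightarrow> complex" and P :: "nat \<Rightarrow> nat \<Rightarrow> complex"
  assumes Pkk: "\<And>k. k < r \<Longrightarrow> P k k = 1"
    and Poff: "\<And>k h. k < r \<Longrightarrow> h < r \<Longrightarrow> k \<noteq> h \<Longrightarrow> cmod (P k h) \<le> c"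
    and c: "c \<ge> 0"
  shows "Re (\<Sum>k<r. \<Sum>h<r. b k * cnj (b h) * P k h)
     \<ge> (\<Sum>k<r. (cmod (b k))\<^sup>2) - (real r - 1) * c * (\<Sum>k<r. (cmod (b k))\<^sup>2)"
proof -
  have step: "Re (\<Sum>h<r. b k * cnj (b h) * P k h) \<ge> (cmod (b k))\<^sup>2 - c * (\<Sum>h\<in>{..<r}-{k}. \<bar>cmod (b k)\<bar> * \<bar>cmod (b h)\<bar>)"
    if k: "k < r" for k
  proof -
    have "(\<Sum>h<r. b k * cnj (b h) * P k h) = b k * cnj (b k) * P k k + (\<Sum>h\<in>{..<r}-{k}. b k * cnj (b h) * P k h)"
      using k by (simp add: sum.remove)
    also have "b k * cnj (b k) * P k k = complex_of_real ((cmod (b k))\<^sup>2)"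
      using Pkk[OF k] by (simp only: complex_norm_square mult_1_right)
    finally have eq: "Re (\<Sum>h<r. b k * cnj (b h) * P k h) = (cmod (b k))\<^sup>2 + Re (\<Sum>h\<in>{..<r}-{k}. b k * cnj (b h) * P k h)"
      by simp
    have "cmod (\<Sum>h\<in>{..<r}-{k}. b k * cnj (b h) * P k h) \<le> (\<Sum>h\<in>{..<r}-{k}. cmod (b k * cnj (b h) * P k h))"
      by (rule norm_sum)
    also have "\<dots> \<le> (\<Sum>h\<in>{..<r}-{k}. c * (\<bar>cmod (b k)\<bar> * \<bar>cmod (b h)\<bar>))"
    proof (intro sum_mono)
      fix h assume h: "h \<in> {..<r}-{k}"
      have "cmod (b k * cnj (b h) * P k h) = (cmod (b k) * cmod (b h)) * cmod (P k h)"
        by (simp add: norm_mult)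
      also have "\<dots> \<le> (cmod (b k) * cmod (b h)) * c"
        using Poff[of k h] h k by (intro mult_left_mono) auto
      finally show "cmod (b k * cnj (b h) * P k h) \<le> c * (\<bar>cmod (b k)\<bar> * \<bar>cmod (b h)\<bar>)"
        by (simp add: mult_ac)
    qed
    also have "\<dots> = c * (\<Sum>h\<in>{..<r}-{k}. \<bar>cmod (b k)\<bar> * \<bar>cmod (b h)\<bar>)"
      by (simp add: sum_distrib_left)
    finally have "cmod (\<Sum>h\<in>{..<r}-{k}. b k * cnj (b h) * P k h) \<le> c * (\<Sum>h\<in>{..<r}-{k}. \<bar>cmod (b k)\<bar> * \<bar>cmod (b h)\<bar>)" .
    moreover have "- cmod (\<Sum>h\<in>{..<r}-{k}. b k * cnj (b h) * P k h) \<le> Re (\<Sum>h\<in>{..<r}-{k}. b k * cnj (b h) * P k h)"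
      using abs_Re_le_cmod[of "\<Sum>h\<in>{..<r}-{k}. b k * cnj (b h) * P k h"] by linarith
    ultimately show ?thesis using eq by linarith
  qed
  have "Re (\<Sum>k<r. \<Sum>h<r. b k * cnj (b h) * P k h) = (\<Sum>k<r. Re (\<Sum>h<r. b k * cnj (b h) * P k h))"
    by (simp add: Re_sum)
  also have "\<dots> \<ge> (\<Sum>k<r. (cmod (b k))\<^sup>2 - c * (\<Sum>h\<in>{..<r}-{k}. \<bar>cmod (b k)\<bar> * \<bar>cmod (b h)\<bar>))"
    using step by (intro sum_mono) auto
  moreover have "(\<Sum>k<r. (cmod (b k))\<^sup>2 - c * (\<Sum>h\<in>{..<r}-{k}. \<bar>cmod (b k)\<bar> * \<bar>cmod (b h)\<bar>))
      = (\<Sum>k<r. (cmod (b k))\<^sup>2) - c * (\<Sum>k<r. \<Sum>h\<in>{..<r}-{k}. \<bar>cmod (b k)\<bar> * \<bar>cmod (b h)\<bar>)"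
    by (simp add: sum_subtractf sum_distrib_left)
  moreover have "c * (\<Sum>k<r. \<Sum>h\<in>{..<r}-{k}. \<bar>cmod (b k)\<bar> * \<bar>cmod (b h)\<bar>) \<le> c * ((real r - 1) * ((\<Sum>k<r. (cmod (b k))\<^sup>2) + (\<Sum>k<r. (cmod (b k))\<^sup>2)) / 2)"
    using pairs_off[where x="\<lambda>k. cmod (b k)" and r=r and y="\<lambda>k. cmod (b k)"] c
    by (intro mult_left_mono) auto
  ultimately show ?thesis by (simp add: algebra_simps)
qed




theorem corollary1:
  fixes d r :: nat and n m :: "nat \<Rightarrow> nat"
    and y :: "nat \<Rightarrow> nat \<Rightarrow> nat \<Rightarrow> complex"
    and \<alpha> \<beta> :: "nat \<Rightarrow> complex"
    and A :: "nat \<Rightarrow> nat \<Rightarrow> nat \<Rightarrow> complex"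
    and \<epsilon> \<epsilon>' :: real
  assumes d_pos: "d \<ge> 1"
    and std: "\<And>l k. l < d \<Longrightarrow> k < r \<Longrightarrow> vnorm2 (n l) (y l k) = 1"
    and eps: "0 < \<epsilon>" "\<epsilon> \<le> 3/4"
    and JL: "\<And>j. j < d \<Longrightarrow> is_JL (\<epsilon> / (4 * real d)) (m j) (n j) (A j) (S_prime r (y j))"
    and eps'_def: "\<epsilon>' = (if mu_Y d n r y = 0
        then (\<epsilon> + exp 1 * sqrt (real r * (real r - 1)) * \<epsilon> ^ d) * exp 1
        else \<epsilon> * (exp 1 + (exp 1)\<^sup>2 * sqrt (real r * (real r - 1))
                 * max (\<epsilon> ^ (d - 1)) ((mu_Y d n r y) ^ (d - 1))))"
  defines "X \<equiv> cp_tensor d r \<beta> y"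
    and "Y \<equiv> cp_tensor d r \<alpha> y"
    and "nb \<equiv> (\<Sum>k<r. (cmod (\<beta> k))\<^sup>2)"
    and "na \<equiv> (\<Sum>k<r. (cmod (\<alpha> k))\<^sup>2)"
  shows "cmod (tinner d m (multi_mode_prod n A d X) (multi_mode_prod n A d Y) - tinner d n X Y)
           \<le> 2 * \<epsilon>' * (nb + na)
         \<and> 2 * \<epsilon>' * (nb + na) \<le> 4 * \<epsilon>' * max nb na
         \<and> ((real r - 1) * mu'_Y d n r y < 1 \<longrightarrow>
              4 * \<epsilon>' * max nb na
                \<le> 4 * \<epsilon>' * max (tnorm2 d n X) (tnorm2 d n Y) / (1 - (real r - 1) * mu'_Y d n r y))"
proof -
  define G where "G l k h = vinner (n l) (y l k) (y l h)" for l k h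
  define ym where "ym l k = mat_vec (n l) (A l) (y l k)" for l k
  define GA where "GA l k h = vinner (m l) (ym l k) (ym l h)" for l k h
  define \<eta> where "\<eta> = \<epsilon> / (2 * real d)"
  define \<mu> where "\<mu> = mu_Y d n r y"
  define \<mu>' where "\<mu>' = mu'_Y d n r y"
  define M where "M = max \<epsilon> \<mu>"
  define R where "R = sqrt (real r * (real r - 1))"
  have dpos: "real d > 0" using d_pos by simp
  have eta_nn: "\<eta> \<ge> 0" using eps dpos unfolding \<eta>_def by simp
  have nb_nn: "nb \<ge> 0" and na_nn: "na \<ge> 0" unfolding nb_def na_def by (auto intro: sum_nonneg)
  have fin1: "finite {cmod (vinner (n l) (y l k) (y l h)) | l k h. l < d \<and> k < r \<and> h < r \<and> k \<noteq> h}"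
  proof (rule finite_subset)
    show "{cmod (vinner (n l) (y l k) (y l h)) | l k h. l < d \<and> k < r \<and> h < r \<and> k \<noteq> h}
       \<subseteq> (\<lambda>(l,k,h). cmod (vinner (n l) (y l k) (y l h))) ` ({..<d} \<times> {..<r} \<times> {..<r})"
    proof clarify
      fix l k h assume "l < d" "k < r" "h < r" "k \<noteq> h"
      then show "cmod (vinner (n l) (y l k) (y l h)) \<in> (\<lambda>(l,k,h). cmod (vinner (n l) (y l k) (y l h))) ` ({..<d} \<times> {..<r} \<times> {..<r})"
        by (intro image_eqI[where x="(l,k,h)"]) auto
    qed
  qed auto
  have fin2: "finite {(\<Prod>l<d. cmod (vinner (n l) (y l k) (y l h))) | k h. k < r \<and> h < r \<and> k \<noteq> h}"
  proof (rule finite_subset)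
    show "{(\<Prod>l<d. cmod (vinner (n l) (y l k) (y l h))) | k h. k < r \<and> h < r \<and> k \<noteq> h}
       \<subseteq> (\<lambda>(k,h). (\<Prod>l<d. cmod (vinner (n l) (y l k) (y l h)))) ` ({..<r} \<times> {..<r})"
    proof clarify
      fix k h assume "k < r" "h < r" "k \<noteq> h"
      then show "(\<Prod>l<d. cmod (vinner (n l) (y l k) (y l h))) \<in> (\<lambda>(k,h). (\<Prod>l<d. cmod (vinner (n l) (y l k) (y l h)))) ` ({..<r} \<times> {..<r})"
        by (intro image_eqI[where x="(k,h)"]) auto
    qed
  qed auto
  have mu_nn: "\<mu> \<ge> 0" unfolding \<mu>_def mu_Y_def using fin1 by (intro Max_ge) auto
  have mu'_nn: "\<mu>' \<ge> 0" unfolding \<mu>'_def mu'_Y_def using fin2 by (intro Max_ge) auto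
  have mu_bd: "cmod (G l k h) \<le> \<mu>" if "l < d" "k < r" "h < r" "k \<noteq> h" for l k h
    unfolding \<mu>_def mu_Y_def G_def using fin1 that by (intro Max_ge) auto
  have mu'_bd: "cmod (\<Prod>l<d. G l k h) \<le> \<mu>'" if "k < r" "h < r" "k \<noteq> h" for k h
  proof -
    have "cmod (\<Prod>l<d. G l k h) = (\<Prod>l<d. cmod (G l k h))" by (simp add: prod_norm)
    also have "\<dots> \<le> \<mu>'" unfolding \<mu>'_def mu'_Y_def G_def using fin2 that by (intro Max_ge) auto
    finally show ?thesis .
  qed
  have Gkk: "G l k k = 1" if "l < d" "k < r" for l k
    unfolding G_def using std[OF that] by (simp add: vinner_self)
  have moderr: "cmod (GA l k h - G l k h) \<le> \<eta>" if "l < d" "k < r" "h < r" for l k h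
  proof -
    have "cmod (GA l k h - G l k h) \<le> 2 * (\<epsilon> / (4 * real d))"
      unfolding GA_def G_def ym_def
      by (rule mode_err[OF JL[OF that(1)] std[OF that(1)] that(3) that(2)])
    then show ?thesis unfolding \<eta>_def by simp
  qed
  have rr: "0 \<le> real r * (real r - 1)" by (cases r) auto
  have R_nn: "R \<ge> 0" unfolding R_def using rr by simp
  have R_ge: "real r - 1 \<le> R"
  proof (cases "r = 0")
    case True then show ?thesis using R_nn by simp
  next
    case False
    then have "(real r - 1)\<^sup>2 \<le> real r * (real r - 1)" by (simp add: power2_eq_square mult_right_mono)
    then show ?thesis unfolding R_def by (rule real_le_rsqrt)
  qed
  have eps'_eq: "\<epsilon>' = \<epsilon> * exp 1 + (exp 1)\<^sup>2 * R * (\<epsilon> * M ^ (d - 1))"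
  proof (cases "\<mu> = 0")
    case True
    then have "M = \<epsilon>" unfolding M_def using eps by simp
    moreover have "\<epsilon> ^ d = \<epsilon> * \<epsilon> ^ (d - 1)" using d_pos by (metis Suc_diff_1 less_le_trans power_Suc zero_less_one)
    ultimately show ?thesis using True unfolding eps'_def \<mu>_def R_def by (simp add: algebra_simps power2_eq_square)
  next
    case False
    have "max (\<epsilon> ^ (d - 1)) (\<mu> ^ (d - 1)) = M ^ (d - 1)" unfolding M_def using eps mu_nn by (intro max_pow) auto
    then show ?thesis using False unfolding eps'_def \<mu>_def R_def by (simp add: algebra_simps)
  qed
  define D where "D = \<epsilon> / 2 * exp 1"
  define Oo where "Oo = \<epsilon> / 2 * exp 1 * M ^ (d - 1)"
  define E where "E k h = cmod ((\<Prod>l<d. GA l k h) - (\<Prod>l<d. G l k h))" for k h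
  have errD: "E k k \<le> D" if k: "k < r" for k
  proof -
    have "E k k \<le> real d * \<eta> * (1 + \<eta>) ^ (d - 1)"
      unfolding E_def
      by (rule prod_pert) (use Gkk k eta_nn in auto, metis Gkk k moderr)
    also have "\<dots> \<le> D" unfolding \<eta>_def D_def using diag_num[OF d_pos eps] .
    finally show ?thesis .
  qed
  have errO: "E k h \<le> Oo" if kh: "k < r" "h < r" "k \<noteq> h" for k h
  proof -
    have "E k h \<le> real d * \<eta> * (\<mu> + \<eta>) ^ (d - 1)"
      unfolding E_def
      by (rule prod_pert) (use mu_bd kh moderr eta_nn mu_nn in auto)
    also have "\<dots> \<le> Oo" unfolding \<eta>_def Oo_def M_def using off_num[OF d_pos eps mu_nn] .
    finally show ?thesis .
  qed
  have M_nn: "M \<ge> 0" unfolding M_def using eps by simp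
  have D_nn: "D \<ge> 0" and O_nn: "Oo \<ge> 0" unfolding D_def Oo_def using eps M_nn by auto
  have lhs: "tinner d m (multi_mode_prod n A d X) (multi_mode_prod n A d Y)
     = (\<Sum>k<r. \<Sum>h<r. \<beta> k * cnj (\<alpha> h) * (\<Prod>l<d. GA l k h))"
    unfolding X_def Y_def mmp_cp_full tinner_cp GA_def ym_def ..
  have rhs: "tinner d n X Y = (\<Sum>k<r. \<Sum>h<r. \<beta> k * cnj (\<alpha> h) * (\<Prod>l<d. G l k h))"
    unfolding X_def Y_def tinner_cp G_def ..
  have "tinner d m (multi_mode_prod n A d X) (multi_mode_prod n A d Y) - tinner d n X Y
      = (\<Sum>k<r. \<Sum>h<r. \<beta> k * cnj (\<alpha> h) * ((\<Prod>l<d. GA l k h) - (\<Prod>l<d. G l k h)))"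
    unfolding lhs rhs by (simp add: sum_subtractf right_diff_distrib)
  then have "cmod (tinner d m (multi_mode_prod n A d X) (multi_mode_prod n A d Y) - tinner d n X Y)
     \<le> (\<Sum>k<r. \<Sum>h<r. cmod (\<beta> k) * cmod (\<alpha> h) * E k h)"
    unfolding E_def
    by (auto intro!: order.trans[OF norm_sum] sum_mono simp: norm_mult)
  also have "\<dots> \<le> D * (nb + na) / 2 + Oo * ((real r - 1) * (nb + na) / 2)"
    unfolding nb_def na_def by (rule err_sum[OF errD errO D_nn O_nn])
  also have "\<dots> \<le> 2 * \<epsilon>' * (nb + na)"
  proof -
    let ?S = "nb + na" and ?q = "M ^ (d - 1)" and ?e = "exp (1::real)"
    have S_nn: "?S \<ge> 0" using nb_nn na_nn by simp
    have q_nn: "?q \<ge> 0" using M_nn by simp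
    have e1: "?e \<ge> 1" by simp
    have A1: "(real r - 1) * (\<epsilon> * ?e * ?q * ?S) \<le> R * (\<epsilon> * ?e * ?q * ?S)"
      using R_ge eps S_nn q_nn by (intro mult_right_mono) auto
    have A2: "R * (\<epsilon> * ?e * ?q * ?S) \<le> ?e * (R * (\<epsilon> * ?e * ?q * ?S))"
    proof -
      have z: "0 \<le> R * (\<epsilon> * ?e * ?q * ?S)" using R_nn eps S_nn q_nn by simp
      show ?thesis using mult_right_mono[OF e1 z] by simp
    qed
    have "D * ?S / 2 + Oo * ((real r - 1) * ?S / 2) = \<epsilon> * ?e * ?S / 4 + (real r - 1) * (\<epsilon> * ?e * ?q * ?S) / 4"
      unfolding D_def Oo_def by (simp add: algebra_simps)
    also have "\<dots> \<le> 2 * (\<epsilon> * ?e * ?S) + 2 * (?e * (R * (\<epsilon> * ?e * ?q * ?S)))"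
    proof (rule add_mono)
      show "\<epsilon> * ?e * ?S / 4 \<le> 2 * (\<epsilon> * ?e * ?S)" using eps S_nn by simp
      have z: "0 \<le> ?e * (R * (\<epsilon> * ?e * ?q * ?S))" using R_nn eps S_nn q_nn by simp
      show "(real r - 1) * (\<epsilon> * ?e * ?q * ?S) / 4 \<le> 2 * (?e * (R * (\<epsilon> * ?e * ?q * ?S)))"
        using A1 A2 z by linarith
    qed
    also have "\<dots> = 2 * \<epsilon>' * ?S" unfolding eps'_eq by (simp add: algebra_simps power2_eq_square)
    finally show ?thesis .
  qed
  finally have C1: "cmod (tinner d m (multi_mode_prod n A d X) (multi_mode_prod n A d Y) - tinner d n X Y)
           \<le> 2 * \<epsilon>' * (nb + na)" .
  have eps'_nn: "\<epsilon>' \<ge> 0" unfolding eps'_eq using eps R_nn M_nn by auto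
  have C2: "2 * \<epsilon>' * (nb + na) \<le> 4 * \<epsilon>' * max nb na"
  proof -
    have "nb + na \<le> 2 * max nb na" by simp
    then have "2 * \<epsilon>' * (nb + na) \<le> 2 * \<epsilon>' * (2 * max nb na)"
      by (rule mult_left_mono) (use eps'_nn in auto)
    then show ?thesis by simp
  qed
  have C3: "4 * \<epsilon>' * max nb na
                \<le> 4 * \<epsilon>' * max (tnorm2 d n X) (tnorm2 d n Y) / (1 - (real r - 1) * mu'_Y d n r y)"
    if cond: "(real r - 1) * mu'_Y d n r y < 1"
  proof -
    define c where "c = 1 - (real r - 1) * \<mu>'"
    have c_pos: "c > 0" using cond unfolding c_def \<mu>'_def by simp
    have tn: "tnorm2 d N Z = Re (tinner d N Z Z)" for N Z
      unfolding tinner_def tnorm2_def by (simp add: complex_norm_square[symmetric] Re_sum)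
    have Pkk: "(\<Prod>l<d. G l k k) = 1" if "k < r" for k using Gkk that by simp
    have low: "tnorm2 d n (cp_tensor d r b y) \<ge> (\<Sum>k<r. (cmod (b k))\<^sup>2) * c" for b
    proof -
      have "tnorm2 d n (cp_tensor d r b y) = Re (\<Sum>k<r. \<Sum>h<r. b k * cnj (b h) * (\<Prod>l<d. G l k h))"
        unfolding tn tinner_cp G_def ..
      also have "\<dots> \<ge> (\<Sum>k<r. (cmod (b k))\<^sup>2) - (real r - 1) * \<mu>' * (\<Sum>k<r. (cmod (b k))\<^sup>2)"
        by (rule norm_lower[OF Pkk mu'_bd mu'_nn])
      finally show ?thesis unfolding c_def by (simp add: algebra_simps)
    qed
    have "nb \<le> tnorm2 d n X / c" using low[of \<beta>] c_pos unfolding X_def nb_def by (simp add: pos_le_divide_eq)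
    moreover have "na \<le> tnorm2 d n Y / c" using low[of \<alpha>] c_pos unfolding Y_def na_def by (simp add: pos_le_divide_eq)
    ultimately have "max nb na \<le> max (tnorm2 d n X) (tnorm2 d n Y) / c"
    proof -
      assume h1: "nb \<le> tnorm2 d n X / c" and h2: "na \<le> tnorm2 d n Y / c"
      have a: "tnorm2 d n X / c \<le> max (tnorm2 d n X) (tnorm2 d n Y) / c"
        by (intro divide_right_mono) (use c_pos in auto)
      have b: "tnorm2 d n Y / c \<le> max (tnorm2 d n X) (tnorm2 d n Y) / c"
        by (intro divide_right_mono) (use c_pos in auto)
      show ?thesis using h1 h2 a b by (intro max.boundedI) linarith+
    qed
    then have "4 * \<epsilon>' * max nb na \<le> 4 * \<epsilon>' * (max (tnorm2 d n X) (tnorm2 d n Y) / c)"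
      using eps'_nn by (intro mult_left_mono) auto
    then show ?thesis unfolding c_def \<mu>'_def by simp
  qed
  show ?thesis using C1 C2 C3 by blast
qed


end
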